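(* Let $A\in\mathbb{R}^{n\times n}$ be symmetric with spectrum contained in $[0,1]$, let $\bm{w}\in\mathbb{R}^n$ with $\|\bm{w}\|=1$, let $m\ge2$ and suppose $m$ Lanczos steps for $A$ and $\bm{w}$ give $V_m$ (first column $\bm{v}_1=\bm{w}$), $\bm{v}_{m+1},H_m,h_{m+1,m}$. Let $\bm{y}_m(t)=V_m\,f(H_m;t)\bm{e}_1$ with $f(z;t)=\tfrac12t^2\psi(t^2z)=(1-\cos(t\sqrt z))/z$, and $\bm{r}_m(t)=-A\bm{y}_m(t)+\bm{v}_1-\bm{y}_m''(t)$. Then for $0\le t\le1$, $$\|\bm{r}_m(t)\|\le\frac{128}{15}\cdot\frac{(t/2)^{2m}}{(2m)!}.$$
   Context: Lanczos: $V_m$ has orthonormal columns with first column $\bm{w}$, $\bm{v}_{m+1}$ is a unit vector orthogonal to them, $H_m=V_m^TAV_m$ is symmetric tridiagonal, $h_{m+1,m}\ge0$, and $AV_m=V_mH_m+h_{m+1,m}\bm{v}_{m+1}\bm{e}_m^T$. $\psi$ is the entire function with $\psi(x^2)=2(1-\cos x)/x^2$, $\psi(0)=1$. Norms are Euclidean. *)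

theory Defs
  imports "HOL-Analysis.Analysis"
begin

text \<open>Taylor coefficients of the entire function psi, with
  psi(x^2) = 2(1 - cos x)/x^2, i.e. psi(z) = sum_k psi_coeff k * z^k.\<close>
definition psi_coeff :: "nat \<Rightarrow> real" where
  "psi_coeff k = 2 * (-1) ^ k / fact (2 * k + 2)"

definition psi :: "real \<Rightarrow> real" where
  "psi z = (\<Sum>k. psi_coeff k * z ^ k)"

text \<open>Square matrices of size m, indexed by 1..m, as functions nat => nat => real.\<close>
fun mpow :: "nat \<Rightarrow> (nat \<Rightarrow> nat \<Rightarrow> real) \<Rightarrow> nat \<Rightarrow> (nat \<Rightarrow> nat \<Rightarrow> real)" where
  "mpow m H 0 = (\<lambda>i j. if i = j then 1 else 0)"
| "mpow m H (Suc k) = (\<lambda>i j. \<Sum>l\<in>{1..m}. H i l * mpow m H k l j)"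

definition psi_mat :: "nat \<Rightarrow> (nat \<Rightarrow> nat \<Rightarrow> real) \<Rightarrow> (nat \<Rightarrow> nat \<Rightarrow> real)" where
  "psi_mat m M = (\<lambda>i j. \<Sum>k. psi_coeff k * mpow m M k i j)"

definition f_mat :: "nat \<Rightarrow> (nat \<Rightarrow> nat \<Rightarrow> real) \<Rightarrow> real \<Rightarrow> (nat \<Rightarrow> nat \<Rightarrow> real)" where
  "f_mat m H t = (\<lambda>i j. t\<^sup>2 / 2 * psi_mat m (\<lambda>a b. t\<^sup>2 * H a b) i j)"

definition mat_spectrum :: "real^'n^'n \<Rightarrow> real set" where
  "mat_spectrum A = {c. \<exists>x. x \<noteq> 0 \<and> A *v x = c *\<^sub>R x}"

end

theory Submission
  imports Defs
begin


lemma scalar_quad_zero: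
  fixes g d :: real
  assumes "d \<ge> 0" and "\<And>e. 0 \<le> 2*e*g + e^2*d"
  shows "g = 0"
proof -
  define e where "e = -g/(d+1)"
  have dp: "d + 1 > 0" using assms(1) by simp
  have ed: "e*(d+1) = -g" using dp unfolding e_def by simp
  have "(d+1)^2*(2*e*g + e^2*d) = 2*(e*(d+1))*g*(d+1) + (e*(d+1))^2*d"
    by (simp add: algebra_simps power2_eq_square)
  also have "\<dots> = -(g^2*(d+2))" unfolding ed by (simp add: algebra_simps power2_eq_square)
  finally have eq: "(d+1)^2*(2*e*g + e^2*d) = -(g^2*(d+2))" .
  have "0 \<le> 2*e*g + e^2*d" by (rule assms(2))
  hence "0 \<le> (d+1)^2*(2*e*g + e^2*d)" by simp
  hence "0 \<le> -(g^2*(d+2))" using eq by simp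
  hence "g^2*(d+2) \<le> 0" using dp by (simp add: divide_le_0_iff)
  moreover have "g^2*2 \<le> g^2*(d+2)" using assms(1) by (intro mult_left_mono) auto
  ultimately have "g^2 \<le> 0" by linarith
  thus ?thesis by simp
qed

lemma norm_add_scale_sq:
  fixes p q :: "'a::real_inner"
  shows "norm (p + e *\<^sub>R q)^2 = norm p^2 + 2*e*(p \<bullet> q) + e^2 * norm q^2"
  unfolding power2_norm_eq_inner
  by (simp add: inner_add_left inner_add_right inner_commute[of q p] power2_eq_square algebra_simps)

lemma eig_half:
  fixes u x :: "'a::real_vector"
  assumes "2 *\<^sub>R u - x = c *\<^sub>R x"
  shows "u = ((c+1)/2) *\<^sub>R x"
proof -
  have "2 *\<^sub>R u = c *\<^sub>R x + x" using assms by (simp add: algebra_simps)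
  hence "2 *\<^sub>R u = (c+1) *\<^sub>R x" by (simp add: algebra_simps)
  hence "(1/2) *\<^sub>R (2 *\<^sub>R u) = (1/2) *\<^sub>R ((c+1) *\<^sub>R x)" by simp
  thus ?thesis by simp
qed

locale symop =
  fixes a :: "'v::euclidean_space \<Rightarrow> 'v"
  assumes lin: "linear a"
    and sym: "\<And>x y. a x \<bullet> y = x \<bullet> a y"
    and spec: "\<And>c x. x \<noteq> 0 \<Longrightarrow> a x = c *\<^sub>R x \<Longrightarrow> 0 \<le> c \<and> c \<le> 1"
begin

definition X :: "'v \<Rightarrow> 'v" where "X x = 2 *\<^sub>R a x - x"

lemma linX: "linear X"
  using lin unfolding X_def[abs_def] linear_iff by (auto simp: algebra_simps scaleR_right_distrib)

lemma X_add: "X (x + y) = X x + X y" using linX by (simp add: linear_add)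
lemma X_diff: "X (x - y) = X x - X y" using linX by (simp add: linear_diff)
lemma X_scale: "X (c *\<^sub>R x) = c *\<^sub>R X x" using linX by (simp add: linear_scale)
lemma X_0: "X 0 = 0" using linX by (simp add: linear_0)

lemma symX: "X x \<bullet> y = x \<bullet> X y"
  by (simp add: X_def inner_diff_left inner_diff_right sym)

lemma contX: "norm (X x) \<le> norm x"
proof -
  let ?S = "sphere (0::'v) 1"
  have ne: "?S \<noteq> {}"
  proof -
    obtain b :: 'v where "b \<in> Basis" using nonempty_Basis by blast
    hence "b \<in> ?S" by auto
    thus ?thesis by blast
  qed
  have cont: "continuous_on ?S (\<lambda>x. norm (X x) ^ 2)"
    using linX by (intro continuous_intros linear_continuous_on iffD1[OF linear_conv_bounded_linear]) auto
  obtain x0 where x0: "x0 \<in> ?S" and mx: "\<And>y. y \<in> ?S \<Longrightarrow> norm (X y)^2 \<le> norm (X x0)^2"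
    using continuous_attains_sup[OF compact_sphere ne cont] by blast
  define L where "L = norm (X x0)^2"
  have nx0: "norm x0 = 1" using x0 by simp
  have bnd: "norm (X y)^2 \<le> L * norm y ^2" for y
  proof (cases "y = 0")
    case True thus ?thesis by (simp add: X_0)
  next
    case False
    have "(1/norm y) *\<^sub>R y \<in> ?S" using False by simp
    hence "norm (X ((1/norm y) *\<^sub>R y))^2 \<le> L" using mx L_def by blast
    hence "(norm (X y)/norm y)^2 \<le> L" by (simp add: X_scale)
    hence "norm (X y)^2 / norm y^2 \<le> L" by (simp only: power_divide)
    moreover have "norm y^2 > 0" using False by simp
    ultimately show ?thesis by (simp add: pos_divide_le_eq)
  qed
  have key: "X x0 \<bullet> X y = L * (x0 \<bullet> y)" for y
  proof -
    define g where "g = L * (x0 \<bullet> y) - X x0 \<bullet> X y"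
    define d where "d = L * norm y^2 - norm (X y)^2"
    have d0: "d \<ge> 0" using bnd d_def by simp
    have "0 \<le> 2*e*g + e^2*d" for e
    proof -
      have "norm (X (x0 + e *\<^sub>R y))^2 \<le> L * norm (x0 + e *\<^sub>R y)^2" by (rule bnd)
      moreover have "norm (X (x0 + e *\<^sub>R y))^2 = L + 2*e*(X x0 \<bullet> X y) + e^2 * norm (X y)^2"
        unfolding X_add X_scale norm_add_scale_sq L_def ..
      moreover have "norm (x0 + e *\<^sub>R y)^2 = 1 + 2*e*(x0 \<bullet> y) + e^2 * norm y^2"
        unfolding norm_add_scale_sq nx0 by simp
      ultimately show ?thesis unfolding g_def d_def by (simp add: algebra_simps)
    qed
    hence "g = 0" using scalar_quad_zero[OF d0] by blast
    thus ?thesis by (simp add: g_def)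
  qed
  have eig: "X (X x0) = L *\<^sub>R x0"
  proof -
    have "X (X x0) \<bullet> y = (L *\<^sub>R x0) \<bullet> y" for y using key[of y] by (simp add: symX)
    hence "(X (X x0) - L *\<^sub>R x0) \<bullet> (X (X x0) - L *\<^sub>R x0) = 0"
      by (simp add: inner_diff_left)
    thus ?thesis by simp
  qed
  have L0: "L \<ge> 0" by (simp add: L_def)
  define \<mu> where "\<mu> = sqrt L"
  have mu0: "\<mu> \<ge> 0" and mu2: "\<mu> * \<mu> = L" using L0 by (auto simp: \<mu>_def)
  have "\<mu> \<le> 1"
  proof (cases "X x0 + \<mu> *\<^sub>R x0 = 0")
    case True
    hence "X x0 = (-\<mu>) *\<^sub>R x0" by (simp add: eq_neg_iff_add_eq_0)
    hence "a x0 = ((-\<mu>+1)/2) *\<^sub>R x0"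
      unfolding X_def by (rule eig_half)
    moreover have "x0 \<noteq> 0" using nx0 by auto
    ultimately show ?thesis using spec by fastforce
  next
    case False
    define z where "z = X x0 + \<mu> *\<^sub>R x0"
    have "X z = \<mu> *\<^sub>R z" unfolding z_def
      by (simp add: X_add X_scale eig mu2[symmetric] algebra_simps)
    hence "2 *\<^sub>R a z - z = \<mu> *\<^sub>R z" by (simp add: X_def)
    hence "a z = ((\<mu> + 1)/2) *\<^sub>R z"
      by (rule eig_half)
    thus ?thesis using spec False z_def by fastforce
  qed
  hence "L \<le> 1" using mult_le_one[OF \<open>\<mu> \<le> 1\<close> mu0 \<open>\<mu> \<le> 1\<close>] mu2 by simp
  hence "L * norm x^2 \<le> 1 * norm x^2" by (intro mult_right_mono) auto
  hence "norm (X x)^2 \<le> norm x^2" using bnd[of x] by linarith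
  thus ?thesis by (rule power2_le_imp_le) simp
qed

end


locale lanc = symop a for a :: "'v::euclidean_space \<Rightarrow> 'v" +
  fixes m :: nat and v :: "nat \<Rightarrow> 'v" and H :: "nat \<Rightarrow> nat \<Rightarrow> real" and h :: real
  assumes m1: "m \<ge> 1"
    and orth: "\<forall>i\<in>{1..m+1}. \<forall>j\<in>{1..m+1}. v i \<bullet> v j = (if i = j then 1 else 0)"
    and Htri: "\<forall>i\<in>{1..m}. \<forall>j\<in>{1..m}. (i + 1 < j \<or> j + 1 < i) \<longrightarrow> H i j = 0"
    and lanczos: "\<forall>j\<in>{1..m}. a (v j)
                    = (\<Sum>i\<in>{1..m}. H i j *\<^sub>R v i) + (if j = m then h *\<^sub>R v (m + 1) else 0)"
begin

definition inS :: "nat \<Rightarrow> 'v \<Rightarrow> bool" where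
  "inS j x \<longleftrightarrow> (\<exists>c. x = (\<Sum>i\<in>{1..j}. c i *\<^sub>R v i))"

lemma inS_0: "inS j 0"
  unfolding inS_def by (rule exI[of _ "\<lambda>_. 0"]) simp

lemma inS_add: "inS j x \<Longrightarrow> inS j y \<Longrightarrow> inS j (x + y)"
  unfolding inS_def
proof (elim exE)
  fix c d assume "x = (\<Sum>i\<in>{1..j}. c i *\<^sub>R v i)" "y = (\<Sum>i\<in>{1..j}. d i *\<^sub>R v i)"
  thus "\<exists>e. x + y = (\<Sum>i\<in>{1..j}. e i *\<^sub>R v i)"
    by (intro exI[of _ "\<lambda>i. c i + d i"]) (simp add: sum.distrib scaleR_add_left)
qed

lemma inS_scale: "inS j x \<Longrightarrow> inS j (r *\<^sub>R x)"
  unfolding inS_def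
proof (elim exE)
  fix c assume "x = (\<Sum>i\<in>{1..j}. c i *\<^sub>R v i)"
  thus "\<exists>e. r *\<^sub>R x = (\<Sum>i\<in>{1..j}. e i *\<^sub>R v i)"
    by (intro exI[of _ "\<lambda>i. r * c i"]) (simp add: scaleR_sum_right)
qed

lemma inS_diff: "inS j x \<Longrightarrow> inS j y \<Longrightarrow> inS j (x - y)"
  using inS_add[of j x "(-1) *\<^sub>R y"] inS_scale[of j y "-1"] by simp

lemma inS_sum: "finite I \<Longrightarrow> (\<And>i. i \<in> I \<Longrightarrow> inS j (f i)) \<Longrightarrow> inS j (\<Sum>i\<in>I. f i)"
  by (induction I rule: finite_induct) (auto intro: inS_add inS_0)

lemma inS_mono: "inS j x \<Longrightarrow> j \<le> k \<Longrightarrow> inS k x"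
  unfolding inS_def
proof (elim exE)
  fix c assume x: "x = (\<Sum>i\<in>{1..j}. c i *\<^sub>R v i)" and jk: "j \<le> k"
  have "(\<Sum>i\<in>{1..k}. (if i \<le> j then c i else 0) *\<^sub>R v i) = (\<Sum>i\<in>{1..j}. (if i \<le> j then c i else 0) *\<^sub>R v i)"
    using jk by (intro sum.mono_neutral_right) auto
  also have "\<dots> = x" unfolding x by (intro sum.cong) auto
  finally show "\<exists>e. x = (\<Sum>i\<in>{1..k}. e i *\<^sub>R v i)" by (intro exI[of _ "\<lambda>i. if i \<le> j then c i else 0"]) simp
qed

lemma inS_v: assumes "i \<in> {1..j}" shows "inS j (v i)"
proof -
  have "(\<Sum>k\<in>{1..j}. (if k = i then 1 else 0) *\<^sub>R v k) = (\<Sum>k\<in>{1..j}. if k = i then v k else 0)"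
    by (intro sum.cong) auto
  also have "\<dots> = v i" using assms by (simp add: sum.delta)
  finally show ?thesis unfolding inS_def by (intro exI[of _ "\<lambda>k. if k = i then 1 else 0"]) simp
qed

lemma inS_av: assumes i: "i \<in> {1..m}" shows "inS (i+1) (a (v i))"
proof -
  have "inS (i+1) (H l i *\<^sub>R v l)" if l: "l \<in> {1..m}" for l
  proof (cases "l \<le> i + 1")
    case True thus ?thesis using l by (intro inS_scale inS_v) auto
  next
    case False hence "H l i = 0" using Htri i l by auto
    thus ?thesis by (simp add: inS_0)
  qed
  hence "inS (i+1) (\<Sum>l\<in>{1..m}. H l i *\<^sub>R v l)" by (intro inS_sum) auto
  moreover have "inS (i+1) (if i = m then h *\<^sub>R v (m + 1) else 0)"
  proof (cases "i = m")
    case True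
    have "inS (i+1) (v (m+1))" using True by (intro inS_v) auto
    thus ?thesis using True by (simp add: inS_scale)
  qed (simp add: inS_0)
  ultimately have "inS (i+1) ((\<Sum>l\<in>{1..m}. H l i *\<^sub>R v l) + (if i = m then h *\<^sub>R v (m + 1) else 0))"
    by (rule inS_add)
  moreover have "a (v i) = (\<Sum>l\<in>{1..m}. H l i *\<^sub>R v l) + (if i = m then h *\<^sub>R v (m + 1) else 0)"
    using lanczos i by blast
  ultimately show ?thesis by simp
qed

lemma inS_a: assumes x: "inS j x" and j: "j \<le> m" shows "inS (j+1) (a x)"
proof -
  obtain c where c: "x = (\<Sum>i\<in>{1..j}. c i *\<^sub>R v i)" using x inS_def by auto
  have "a x = (\<Sum>i\<in>{1..j}. c i *\<^sub>R a (v i))" unfolding c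
    using lin by (simp add: linear_sum linear_scale)
  also have "inS (j+1) \<dots>"
    using j by (intro inS_sum inS_scale inS_mono[OF inS_av]) auto
  finally show ?thesis .
qed

lemma inS_X: assumes "inS j x" "j \<le> m" shows "inS (j+1) (X x)"
proof -
  have "inS (j+1) (a x)" by (rule inS_a[OF assms])
  hence "inS (j+1) (2 *\<^sub>R a x)" by (rule inS_scale)
  moreover have "inS (j+1) x" by (rule inS_mono[OF assms(1)]) simp
  ultimately show ?thesis unfolding X_def by (rule inS_diff)
qed

lemma orth_inS: assumes x: "inS j x" and k: "k \<in> {j+1..m+1}" shows "v k \<bullet> x = 0"
proof -
  obtain c where c: "x = (\<Sum>i\<in>{1..j}. c i *\<^sub>R v i)" using x inS_def by auto
  have "v k \<bullet> x = (\<Sum>i\<in>{1..j}. c i * (v k \<bullet> v i))" unfolding c by (simp add: inner_sum_right)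
  also have "\<dots> = 0" using orth k by (intro sum.neutral) auto
  finally show ?thesis .
qed

definition \<beta> :: "nat \<Rightarrow> real" where "\<beta> j = v (j+1) \<bullet> a (v j)"

lemma top_a: assumes x: "inS j x" and j: "1 \<le> j" "j \<le> m"
  shows "v (j+1) \<bullet> a x = \<beta> j * (v j \<bullet> x)"
proof -
  obtain c where c: "x = (\<Sum>i\<in>{1..j}. c i *\<^sub>R v i)" using x inS_def by auto
  have "v (j+1) \<bullet> a x = (\<Sum>i\<in>{1..j}. c i * (v (j+1) \<bullet> a (v i)))" unfolding c
    using lin by (simp add: linear_sum linear_scale inner_sum_right)
  also have "\<dots> = (\<Sum>i\<in>{j}. c i * (v (j+1) \<bullet> a (v i)))"
  proof (intro sum.mono_neutral_right)
    show "\<forall>i\<in>{1..j} - {j}. c i * (v (j + 1) \<bullet> a (v i)) = 0"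
    proof
      fix i assume i: "i \<in> {1..j} - {j}"
      hence "inS (i+1) (a (v i))" using j by (intro inS_av) auto
      hence "v (j+1) \<bullet> a (v i) = 0" using i j by (intro orth_inS) auto
      thus "c i * (v (j + 1) \<bullet> a (v i)) = 0" by simp
    qed
  qed (use j in auto)
  also have "\<dots> = \<beta> j * c j" by (simp add: \<beta>_def)
  also have "v j \<bullet> x = c j"
  proof -
    have "v j \<bullet> x = (\<Sum>i\<in>{1..j}. c i * (v j \<bullet> v i))" unfolding c by (simp add: inner_sum_right)
    also have "\<dots> = (\<Sum>i\<in>{1..j}. (if i = j then c j else 0))"
      using orth j by (intro sum.cong) auto
    also have "\<dots> = c j" using j by simp
    finally show ?thesis .
  qed
  ultimately show ?thesis by simp
qed

lemma top_X: assumes x: "inS j x" and j: "1 \<le> j" "j \<le> m"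
  shows "v (j+1) \<bullet> X x = 2 * \<beta> j * (v j \<bullet> x)"
proof -
  have "v (j+1) \<bullet> x = 0" by (rule orth_inS[OF x]) (use j in auto)
  thus ?thesis using top_a[OF assms] by (simp add: X_def inner_diff_right)
qed

end


context lanc begin

primrec cheb :: "nat \<Rightarrow> 'v \<times> 'v" where
  "cheb 0 = (v 1, 0)"
| "cheb (Suc k) = (X (fst (cheb k)) - (snd (cheb k) - X (X (snd (cheb k)))),
                   fst (cheb k) + X (snd (cheb k)))"

lemma cheb_step_inv:
  fixes t s :: 'v
  shows "norm (X t - (s - X (X s)))^2 + (norm (t + X s)^2 - norm (X (t + X s))^2)
       = norm t^2 + (norm s^2 - norm (X s)^2)"
proof -
  have c1: "s \<bullet> X t = t \<bullet> X s" by (metis symX inner_commute)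
  have c2: "X s \<bullet> t = t \<bullet> X s" by (metis inner_commute)
  have c3: "X (X s) \<bullet> X t = X t \<bullet> X (X s)" by (metis inner_commute)
  have c4: "X t \<bullet> t = t \<bullet> X t" by (metis inner_commute)
  show ?thesis
    by (simp add: power2_norm_eq_inner inner_add_left inner_add_right inner_diff_left
        inner_diff_right X_add X_diff symX c1 c2 c3 c4 algebra_simps)
qed

lemma v1_norm: "norm (v 1) = 1"
proof -
  have "v 1 \<bullet> v 1 = 1" using orth by auto
  thus ?thesis by (simp add: norm_eq_1)
qed

lemma cheb_inv: "norm (fst (cheb k))^2 + (norm (snd (cheb k))^2 - norm (X (snd (cheb k)))^2) = 1"
proof (induction k)
  case 0 thus ?case using v1_norm by (simp add: X_0)
next
  case (Suc k) thus ?case using cheb_step_inv by simp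
qed

lemma cheb_norm: "norm (fst (cheb k)) \<le> 1"
proof -
  have "norm (X (snd (cheb k))) \<le> norm (snd (cheb k))" by (rule contX)
  hence "norm (X (snd (cheb k)))^2 \<le> norm (snd (cheb k))^2" by (simp add: power_mono)
  hence "norm (fst (cheb k))^2 \<le> 1" using cheb_inv[of k] by linarith
  thus ?thesis by (simp add: power_le_one_iff)
qed

lemma cheb_inS: "k \<le> m \<Longrightarrow> inS (k+1) (fst (cheb k)) \<and> inS k (snd (cheb k))"
proof (induction k)
  case 0 thus ?case by (simp add: inS_v inS_0)
next
  case (Suc k)
  hence IH: "inS (k+1) (fst (cheb k))" "inS k (snd (cheb k))" and km: "k + 1 \<le> m" by auto
  have a1: "inS (k+2) (X (fst (cheb k)))" using inS_X[OF IH(1)] km by simp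
  have a2: "inS (k+1) (X (snd (cheb k)))" using inS_X[OF IH(2)] km by simp
  have a3: "inS (k+2) (X (X (snd (cheb k))))" using inS_X[OF a2] km by simp
  have a4: "inS (k+2) (snd (cheb k))" using inS_mono[OF IH(2)] by simp
  have a5: "inS (k+1) (fst (cheb k))" using IH(1) .
  show ?case using a1 a2 a3 a4 a5
    by (simp add: inS_diff inS_add)
qed

lemma cheb_top:
  assumes "1 \<le> k" "k \<le> m"
  shows "v (k+1) \<bullet> fst (cheb k) = 2^(2*k-1) * (\<Prod>j\<in>{1..k}. \<beta> j)
       \<and> v k \<bullet> snd (cheb k) = 2^(2*k-2) * (\<Prod>j\<in>{1..<k}. \<beta> j)"
  using assms
proof (induction k rule: dec_induct)
  case base
  have c1: "cheb 1 = (X (v 1), v 1)" by (simp add: X_0)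
  have t: "v (1+1) \<bullet> X (v 1) = 2 * \<beta> 1 * (v 1 \<bullet> v 1)"
    by (rule top_X[OF inS_v[of 1 1]]) (use m1 in auto)
  have o: "v 1 \<bullet> v 1 = 1" using orth by auto
  show ?case unfolding c1 fst_conv snd_conv using t o by simp
next
  case (step k)
  have km: "k + 1 \<le> m" using step by simp
  have IH: "v (k+1) \<bullet> fst (cheb k) = 2^(2*k-1) * (\<Prod>j\<in>{1..k}. \<beta> j)"
           "v k \<bullet> snd (cheb k) = 2^(2*k-2) * (\<Prod>j\<in>{1..<k}. \<beta> j)"
    using step by auto
  have S: "inS (k+1) (fst (cheb k))" "inS k (snd (cheb k))" using cheb_inS km by auto
  have SX: "inS (k+1) (X (snd (cheb k)))" using inS_X[OF S(2)] km by simp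
  define P where "P = (\<Prod>j\<in>{1..<k}. \<beta> j)"
  have Pk: "(\<Prod>j\<in>{1..k}. \<beta> j) = \<beta> k * P"
    unfolding P_def using step(1) by (simp add: atLeastLessThanSuc_atLeastAtMost[symmetric] prod.atLeast_Suc_lessThan[symmetric] prod.atLeastLessThan_Suc mult.commute)
  have Pk1: "(\<Prod>j\<in>{1..k+1}. \<beta> j) = \<beta> (k+1) * (\<beta> k * P)"
    using Pk by (simp add: mult.commute)
  have d1: "v (k+1) \<bullet> X (snd (cheb k)) = 2 * \<beta> k * (v k \<bullet> snd (cheb k))"
    using top_X[OF S(2)] step km by simp
  have dnew: "v (k+1) \<bullet> snd (cheb (Suc k)) = 2^(2*k) * (\<beta> k * P)"
  proof -
    have "v (k+1) \<bullet> snd (cheb (Suc k)) = v (k+1) \<bullet> fst (cheb k) + v (k+1) \<bullet> X (snd (cheb k))"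
      by (simp add: inner_add_right)
    also have "\<dots> = 2^(2*k-1) * (\<beta> k * P) + 2 * \<beta> k * (2^(2*k-2) * P)"
      using IH d1 Pk unfolding P_def by simp
    also have "\<dots> = 2^(2*k) * (\<beta> k * P)"
    proof -
      obtain q where q: "k = Suc q" using step(1) by (cases k) auto
      have "(2::real)^(2*k) = 2 * 2^(2*k-1)" "(2::real)^(2*k-1) = 2 * 2^(2*k-2)"
        by (simp_all add: q)
      thus ?thesis by (simp add: algebra_simps)
    qed
    finally show ?thesis .
  qed
  have tnew: "v (k+2) \<bullet> fst (cheb (Suc k)) = 2 * \<beta> (k+1) * (v (k+1) \<bullet> snd (cheb (Suc k)))"
  proof -
    have o: "v (k+2) \<bullet> snd (cheb k) = 0" by (rule orth_inS[OF S(2)]) (use km in auto)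
    have x1: "v (k+2) \<bullet> X (fst (cheb k)) = 2 * \<beta> (k+1) * (v (k+1) \<bullet> fst (cheb k))"
      using top_X[OF S(1)] km by simp
    have x2: "v (k+2) \<bullet> X (X (snd (cheb k))) = 2 * \<beta> (k+1) * (v (k+1) \<bullet> X (snd (cheb k)))"
      using top_X[OF SX] km by simp
    show ?thesis using o x1 x2
      by (simp add: inner_add_right inner_diff_right algebra_simps)
  qed
  show ?case
  proof
    show "v (Suc k + 1) \<bullet> fst (cheb (Suc k)) = 2 ^ (2 * Suc k - 1) * (\<Prod>j\<in>{1..Suc k}. \<beta> j)"
    proof -
      have eq: "Suc k + 1 = k + 2" by simp
      have "v (Suc k + 1) \<bullet> fst (cheb (Suc k)) = 2 * \<beta> (k+1) * (2^(2*k) * (\<beta> k * P))"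
        unfolding eq tnew dnew ..
      also have "\<dots> = 2 ^ (2 * Suc k - 1) * (\<beta> (k+1) * (\<beta> k * P))" by simp
      also have "\<dots> = 2 ^ (2 * Suc k - 1) * (\<Prod>j\<in>{1..Suc k}. \<beta> j)" using Pk1 by (simp only: Suc_eq_plus1)
      finally show ?thesis .
    qed
    show "v (Suc k) \<bullet> snd (cheb (Suc k)) = 2 ^ (2 * Suc k - 2) * (\<Prod>j\<in>{1..<Suc k}. \<beta> j)"
      using dnew Pk by (simp add: atLeastLessThanSuc_atLeastAtMost)
  qed
qed

lemma beta_prod_bound: "2^(2*m-1) * \<bar>\<Prod>j\<in>{1..m}. \<beta> j\<bar> \<le> 1"
proof -
  have "\<bar>v (m+1) \<bullet> fst (cheb m)\<bar> \<le> norm (v (m+1)) * norm (fst (cheb m))"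
    by (rule Cauchy_Schwarz_ineq2)
  also have "norm (v (m+1)) = 1"
  proof -
    have "v (m+1) \<bullet> v (m+1) = 1" using orth by auto
    thus ?thesis by (simp add: norm_eq_1)
  qed
  finally have "\<bar>v (m+1) \<bullet> fst (cheb m)\<bar> \<le> 1" using cheb_norm[of m] by simp
  thus ?thesis using cheb_top[of m] m1 by (simp add: abs_mult)
qed

end


definition cc :: "nat \<Rightarrow> nat \<Rightarrow> real" where
  "cc k i = real ((2*k) choose (k+i-1)) * 2^(i-1) / 2^k"

lemma cc_nonneg: "cc k i \<ge> 0" by (simp add: cc_def)

lemma binom_ss: "Suc (Suc n) choose Suc (Suc r) = (n choose r) + 2 * (n choose Suc r) + (n choose Suc (Suc r))"
  by (simp add: binomial_Suc_Suc)

lemma binom_mid: "2 * ((2*k) choose k) + ((2*k) choose Suc k) \<le> Suc (Suc (2*k)) choose Suc k"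
proof -
  have a: "Suc (Suc (2*k)) choose Suc k = (Suc (2*k) choose k) + (Suc (2*k) choose Suc k)"
    by (simp add: binomial_Suc_Suc)
  have b: "Suc (2*k) choose Suc k = ((2*k) choose k) + ((2*k) choose Suc k)"
    by (simp add: binomial_Suc_Suc)
  have c: "(2*k) choose k \<le> Suc (2*k) choose k"
  proof (cases k)
    case 0 thus ?thesis by simp
  next
    case (Suc q)
    have "Suc (2*k) choose Suc q = ((2*k) choose q) + ((2*k) choose Suc q)" by (simp add: binomial_Suc_Suc)
    thus ?thesis using Suc by simp
  qed
  show ?thesis using a b c by simp
qed

lemma cc_rec:
  assumes "i \<ge> 1"
  shows "(if i \<ge> 2 then cc k (i-1) else 0) + cc k i + cc k (i+1) / 4 \<le> cc (Suc k) i"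
proof (cases "i \<ge> 2")
  case False
  hence i: "i = 1" using assms by simp
  have "real (2 * ((2*k) choose k) + ((2*k) choose Suc k)) \<le> real (Suc (Suc (2*k)) choose Suc k)"
    using binom_mid by (simp only: of_nat_le_iff)
  hence "(2 * real ((2*k) choose k) + real ((2*k) choose Suc k)) / 2^(Suc k) \<le> real (Suc (Suc (2*k)) choose Suc k) / 2^(Suc k)"
    by (intro divide_right_mono) auto
  thus ?thesis using i by (simp add: cc_def field_simps)
next
  case True
  then obtain j where j: "i = j + 2" by (metis add.commute le_Suc_ex)
  have e: "real (Suc (Suc (2*k)) choose Suc (Suc (k+j))) = real ((2*k) choose (k+j)) + 2 * real ((2*k) choose Suc (k+j)) + real ((2*k) choose Suc (Suc (k+j)))"
    unfolding binom_ss by simp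
  have lhs: "(if i \<ge> 2 then cc k (i-1) else 0) + cc k i + cc k (i+1) / 4
      = (real ((2*k) choose (k+j)) + 2 * real ((2*k) choose Suc (k+j)) + real ((2*k) choose Suc (Suc (k+j)))) * 2^j / 2^k"
    using True unfolding j cc_def by (simp add: field_simps power_add)
  have rhs: "cc (Suc k) i = real (Suc (Suc (2*k)) choose Suc (Suc (k+j))) * 2^j / 2^k"
    unfolding j cc_def by (simp add: field_simps)
  show ?thesis unfolding lhs rhs e by (simp add: algebra_simps)
qed


definition Qp :: "(nat \<Rightarrow> nat \<Rightarrow> real) \<Rightarrow> nat \<Rightarrow> real" where
  "Qp H i = (\<Prod>l\<in>{1..<i}. \<bar>H (l+1) l\<bar>)"

lemma Qp_nonneg: "Qp H i \<ge> 0" by (simp add: Qp_def prod_nonneg)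

lemma Qp_Suc: "l \<ge> 1 \<Longrightarrow> Qp H (Suc l) = \<bar>H (l+1) l\<bar> * Qp H l"
  unfolding Qp_def by (simp add: prod.atLeastLessThan_Suc mult.commute)

lemma mpow_bound:
  fixes H :: "nat \<Rightarrow> nat \<Rightarrow> real"
  assumes tri: "\<forall>i\<in>{1..m}. \<forall>j\<in>{1..m}. (i + 1 < j \<or> j + 1 < i) \<longrightarrow> H i j = 0"
    and sym: "\<forall>i\<in>{1..m}. \<forall>j\<in>{1..m}. H i j = H j i"
    and diag: "\<forall>i\<in>{1..m}. \<bar>H i i\<bar> \<le> 1"
    and off: "\<forall>i\<in>{1..m}. \<forall>j\<in>{1..m}. i \<noteq> j \<longrightarrow> \<bar>H i j\<bar> \<le> 1/2"
  shows "\<forall>i\<in>{1..m}. \<bar>mpow m H k i 1\<bar> \<le> Qp H i * cc k i"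
proof (induction k)
  case 0
  show ?case
  proof
    fix i assume i: "i \<in> {1..m}"
    show "\<bar>mpow m H 0 i 1\<bar> \<le> Qp H i * cc 0 i"
    proof (cases "i = 1")
      case True thus ?thesis by (simp add: Qp_def cc_def)
    next
      case False thus ?thesis by (simp add: Qp_nonneg cc_nonneg)
    qed
  qed
next
  case (Suc k)
  show ?case
  proof
    fix i assume i: "i \<in> {1..m}"
    define g where "g l = (if l = i - 1 then (if i \<ge> 2 then Qp H i * cc k (i-1) else 0) else 0)
        + (if l = i then Qp H i * cc k i else 0) + (if l = i + 1 then Qp H i * cc k (i+1) / 4 else 0)" for l
    have tb: "\<bar>H i l * mpow m H k l 1\<bar> \<le> g l" if l: "l \<in> {1..m}" for l
    proof -
      have IH: "\<bar>mpow m H k l 1\<bar> \<le> Qp H l * cc k l" using Suc l by blast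
      have pos: "Qp H l * cc k l \<ge> 0" by (simp add: Qp_nonneg cc_nonneg)
      consider "l + 1 = i" | "l = i" | "l = i + 1" | "i + 1 < l \<or> l + 1 < i" by linarith
      thus ?thesis
      proof cases
        case 1
        have Q: "Qp H i = \<bar>H i l\<bar> * Qp H l" using Qp_Suc[of l H] l 1 by auto
        have "\<bar>H i l * mpow m H k l 1\<bar> = \<bar>H i l\<bar> * \<bar>mpow m H k l 1\<bar>" by (simp add: abs_mult)
        also have "\<dots> \<le> \<bar>H i l\<bar> * (Qp H l * cc k l)" by (intro mult_left_mono IH) auto
        also have "\<dots> = g l" using 1 l unfolding g_def Q by auto
        finally show ?thesis .
      next
        case 2
        have "\<bar>H i l * mpow m H k l 1\<bar> = \<bar>H i l\<bar> * \<bar>mpow m H k l 1\<bar>" by (simp add: abs_mult)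
        also have "\<dots> \<le> 1 * (Qp H l * cc k l)"
          using diag l 2 by (intro mult_mono IH) auto
        also have "\<dots> = g l" using 2 unfolding g_def by auto
        finally show ?thesis .
      next
        case 3
        have Q: "Qp H l = \<bar>H l i\<bar> * Qp H i" using Qp_Suc[of i H] i 3 by auto
        have h1: "\<bar>H i l\<bar> \<le> 1/2" using off i l 3 by auto
        have h2: "\<bar>H l i\<bar> \<le> 1/2" using off i l 3 by auto
        have "\<bar>H i l * mpow m H k l 1\<bar> = \<bar>H i l\<bar> * \<bar>mpow m H k l 1\<bar>" by (simp add: abs_mult)
        also have "\<dots> \<le> \<bar>H i l\<bar> * (Qp H l * cc k l)" by (intro mult_left_mono IH) auto
        also have "\<dots> = (\<bar>H i l\<bar> * \<bar>H l i\<bar>) * (Qp H i * cc k l)" unfolding Q by (simp add: ac_simps)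
        also have "\<dots> \<le> (1/2 * (1/2)) * (Qp H i * cc k l)"
          by (intro mult_right_mono mult_mono h1 h2) (auto simp: Qp_nonneg cc_nonneg)
        also have "\<dots> = g l" using 3 unfolding g_def by auto
        finally show ?thesis .
      next
        case 4
        hence "H i l = 0" using tri i l by blast
        moreover have "g l = 0" using 4 unfolding g_def by auto
        ultimately show ?thesis by simp
      qed
    qed
    have "\<bar>mpow m H (Suc k) i 1\<bar> = \<bar>\<Sum>l\<in>{1..m}. H i l * mpow m H k l 1\<bar>" by simp
    also have "\<dots> \<le> (\<Sum>l\<in>{1..m}. \<bar>H i l * mpow m H k l 1\<bar>)" by (rule sum_abs)
    also have "\<dots> \<le> (\<Sum>l\<in>{1..m}. g l)" by (intro sum_mono tb)
    also have "\<dots> = (if i - 1 \<in> {1..m} then (if i \<ge> 2 then Qp H i * cc k (i-1) else 0) else 0)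
        + (if i \<in> {1..m} then Qp H i * cc k i else 0) + (if i + 1 \<in> {1..m} then Qp H i * cc k (i+1) / 4 else 0)"
      unfolding g_def by (simp add: sum.distrib sum.delta)
    also have "\<dots> \<le> (if i \<ge> 2 then Qp H i * cc k (i-1) else 0) + Qp H i * cc k i + Qp H i * cc k (i+1) / 4"
      by (intro add_mono) (auto simp: Qp_nonneg cc_nonneg)
    also have "\<dots> = Qp H i * ((if i \<ge> 2 then cc k (i-1) else 0) + cc k i + cc k (i+1) / 4)"
      by (simp add: algebra_simps)
    also have "\<dots> \<le> Qp H i * cc (Suc k) i"
      using i by (intro mult_left_mono cc_rec) (auto simp: Qp_nonneg)
    finally show "\<bar>mpow m H (Suc k) i 1\<bar> \<le> Qp H i * cc (Suc k) i" .
  qed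
qed



lemma fact_binom_bound:
  assumes m: "m \<ge> 1" and mk: "m \<le> k + 1"
  shows "real ((2*k) choose (k+m-1)) * fact (2*m) \<le> fact (2*k+2)"
proof -
  define r where "r = k + m - 1"
  have r: "r \<le> 2*k" "2*m - 2 \<le> r" using m mk by (auto simp: r_def)
  have fl: "fact r * fact (2*k - r) * ((2*k) choose r) = (fact (2*k) :: real)"
    using binomial_fact_lemma[OF r(1)] by (metis of_nat_fact of_nat_mult)
  have "real ((2*k) choose r) * fact (2*m - 2) \<le> real ((2*k) choose r) * fact r"
    using r(2) by (intro mult_left_mono fact_mono) auto
  also have "\<dots> \<le> real ((2*k) choose r) * fact r * fact (2*k - r)"
    using mult_left_mono[OF fact_ge_1[of "2*k-r"], of "real ((2*k) choose r) * fact r"] by simp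
  also have "\<dots> = fact (2*k)" using fl by (simp add: ac_simps)
  finally have A: "real ((2*k) choose r) * fact (2*m - 2) \<le> fact (2*k)" .
  have f1: "(fact (2*m) :: real) = (2*m) * (2*m - 1) * fact (2*m - 2)"
  proof -
    obtain q where q: "m = Suc q" using m by (cases m) auto
    show ?thesis unfolding q by (simp add: algebra_simps)
  qed
  have f2: "(fact (2*k+2) :: real) = (2*real k+2) * (2*real k+1) * fact (2*k)" by (simp add: algebra_simps)
  have B: "real (2*m) * real (2*m - 1) \<le> (2*real k+2) * (2*real k+1)"
  proof -
    have "2*m \<le> 2*k+2" "2*m - 1 \<le> 2*k+1" using mk by auto
    hence "real (2*m) \<le> 2*real k+2" "real (2*m - 1) \<le> 2*real k+1" by linarith+
    thus ?thesis by (intro mult_mono) auto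
  qed
  have "real ((2*k) choose r) * fact (2*m) = (real (2*m) * real (2*m - 1)) * (real ((2*k) choose r) * fact (2*m - 2))"
    unfolding f1 by (simp add: ac_simps)
  also have "\<dots> \<le> ((2*real k+2) * (2*real k+1)) * fact (2*k)"
    by (intro mult_mono B A) auto
  also have "\<dots> = fact (2*k+2)" using f2 by simp
  finally show ?thesis unfolding r_def .
qed

lemma frac_aux: "(0::real) < F \<Longrightarrow> 0 < G \<Longrightarrow> c*G \<le> F \<Longrightarrow> c/F \<le> 1/G"
  by (simp add: field_simps)

lemma cc_zero: "k + 1 < m \<Longrightarrow> cc k m = 0"
  unfolding cc_def by simp

definition bser :: "real \<Rightarrow> nat \<Rightarrow> nat \<Rightarrow> real" where
  "bser t m k = t^(2*k) * cc k m / fact (2*k+2)"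

lemma bser_le:
  assumes t: "0 \<le> t" "t \<le> 1" and m: "m \<ge> 1"
  shows "bser t m k \<le> t^(2*m-2) / fact (2*m) * (if m - 1 \<le> k then (1/2)^(k - (m-1)) else 0)"
proof (cases "m - 1 \<le> k")
  case False
  hence "cc k m = 0" by (intro cc_zero) auto
  thus ?thesis using False by (simp add: bser_def)
next
  case True
  hence mk: "m \<le> k + 1" by simp
  have tp: "t^(2*k) \<le> t^(2*m-2)" using t mk by (intro power_decreasing) auto
  have c: "cc k m = real ((2*k) choose (k+m-1)) * (1/2)^(k - (m-1))"
  proof -
    have "(2::real)^(m-1) / 2^k = (1/2)^(k-(m-1))"
      using True by (simp add: power_diff power_one_over)
    thus ?thesis unfolding cc_def by (simp add: field_simps)
  qed
  have fb: "real ((2*k) choose (k+m-1)) / fact (2*k+2) \<le> 1 / fact (2*m)"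
    by (rule frac_aux[OF _ _ fact_binom_bound[OF m mk]]) auto
  have "bser t m k = t^(2*k) * (real ((2*k) choose (k+m-1)) / fact (2*k+2)) * (1/2)^(k - (m-1))"
    unfolding bser_def c by (simp add: field_simps)
  also have "\<dots> \<le> t^(2*m-2) * (1 / fact (2*m)) * (1/2)^(k - (m-1))"
    using tp fb t by (intro mult_right_mono mult_mono) auto
  finally show ?thesis using True by simp
qed

lemma geo_shift_sums: "(\<lambda>k. if N \<le> k then (1/2::real)^(k - N) else 0) sums 2"
proof -
  have "(\<lambda>i. (if N \<le> i + N then (1/2::real)^(i + N - N) else 0)) sums 2"
    using geometric_sums[of "1/2::real"] by simp
  thus ?thesis by (subst (asm) sums_zero_iff_shift) auto
qed

lemma bser_nonneg: "0 \<le> t \<Longrightarrow> 0 \<le> bser t m k"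
  by (simp add: bser_def cc_nonneg)

lemma bser_summable_le:
  assumes t: "0 \<le> t" "t \<le> 1" and m: "m \<ge> 1"
  shows "summable (bser t m)" and "suminf (bser t m) \<le> 2 * t^(2*m-2) / fact (2*m)"
proof -
  define e where "e k = t^(2*m-2) / fact (2*m) * (if m - 1 \<le> k then (1/2::real)^(k - (m-1)) else 0)" for k
  have es: "e sums (t^(2*m-2) / fact (2*m) * 2)"
    unfolding e_def by (intro sums_mult geo_shift_sums)
  have le: "\<And>k. bser t m k \<le> e k" using bser_le[OF t m] e_def by simp
  show sm: "summable (bser t m)"
    by (rule summable_comparison_test[of _ e]) (use le bser_nonneg[OF t(1)] es in \<open>auto intro: sums_summable\<close>)
  have "suminf (bser t m) \<le> suminf e"
    by (intro suminf_le le sm sums_summable[OF es])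
  also have "\<dots> = t^(2*m-2) / fact (2*m) * 2" using sums_unique[OF es] by simp
  also have "\<dots> = 2 * t^(2*m-2) / fact (2*m)" by simp
  finally show "suminf (bser t m) \<le> 2 * t^(2*m-2) / fact (2*m)" .
qed



definition co :: "nat \<Rightarrow> (nat \<Rightarrow> nat \<Rightarrow> real) \<Rightarrow> nat \<Rightarrow> nat \<Rightarrow> real" where
  "co m H i n = (if even n \<and> n \<ge> 2 then psi_coeff ((n-2) div 2) * mpow m H ((n-2) div 2) i 1 / 2 else 0)"

lemma co_at: "co m H i (2*q+2) = psi_coeff q * mpow m H q i 1 / 2"
  unfolding co_def by simp

lemma co_zero: "n \<notin> range (\<lambda>q. 2*q+2) \<Longrightarrow> co m H i n = 0"
proof -
  assume n: "n \<notin> range (\<lambda>q. 2*q+2)"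
  have "\<not> (even n \<and> n \<ge> 2)"
  proof
    assume "even n \<and> n \<ge> 2"
    then obtain q where "n = 2*q" by auto
    hence "n = 2*(q-1)+2" using \<open>even n \<and> n \<ge> 2\<close> by auto
    thus False using n by auto
  qed
  thus ?thesis unfolding co_def by (intro if_not_P)
qed

lemma mpow_scale: "mpow m (\<lambda>a b. c * H a b) k i j = c^k * mpow m H k i j"
  by (induction k arbitrary: i) (auto simp: sum_distrib_left ac_simps)

lemma mpow_crude:
  assumes B: "\<forall>i\<in>{1..m}. (\<Sum>l\<in>{1..m}. \<bar>H i l\<bar>) \<le> B" "B \<ge> 1"
  shows "\<forall>i\<in>{1..m}. \<bar>mpow m H k i j\<bar> \<le> B^k"
proof (induction k)
  case 0 thus ?case by simp
next
  case (Suc k)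
  show ?case
  proof
    fix i assume i: "i \<in> {1..m}"
    have "\<bar>mpow m H (Suc k) i j\<bar> \<le> (\<Sum>l\<in>{1..m}. \<bar>H i l * mpow m H k l j\<bar>)"
      by (simp add: sum_abs)
    also have "\<dots> \<le> (\<Sum>l\<in>{1..m}. \<bar>H i l\<bar> * B^k)"
      using Suc by (intro sum_mono) (auto simp: abs_mult intro: mult_left_mono)
    also have "\<dots> = (\<Sum>l\<in>{1..m}. \<bar>H i l\<bar>) * B^k" by (simp add: sum_distrib_right)
    also have "\<dots> \<le> B * B^k" using B i by (intro mult_right_mono) auto
    finally show "\<bar>mpow m H (Suc k) i j\<bar> \<le> B^(Suc k)" by simp
  qed
qed

lemma abs_psi_coeff: "\<bar>psi_coeff q\<bar> = 2 / fact (2*q+2)"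
  unfolding psi_coeff_def by (simp add: abs_mult)

lemma frac_aux4: "2 * G \<le> F \<Longrightarrow> (0::real) < F \<Longrightarrow> 0 < G \<Longrightarrow> 2 / F \<le> inverse G"
  by (simp add: field_simps)

locale crude =
  fixes m :: nat and H :: "nat \<Rightarrow> nat \<Rightarrow> real" and B :: real
  assumes Bp: "\<forall>i\<in>{1..m}. (\<Sum>l\<in>{1..m}. \<bar>H i l\<bar>) \<le> B" "B \<ge> 1"
begin

lemma P_bound: "i \<in> {1..m} \<Longrightarrow> \<bar>mpow m H k i 1\<bar> \<le> B^k"
  using mpow_crude[OF Bp] by blast

lemma co_bound:
  assumes i: "i \<in> {1..m}"
  shows "\<bar>co m H i n * x^n\<bar> \<le> inverse (fact n) * (B * \<bar>x\<bar>)^n"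
proof (cases "n \<in> range (\<lambda>q. 2*q+2)")
  case False thus ?thesis using co_zero[OF False] Bp(2) by simp
next
  case True
  then obtain q where n: "n = 2*q+2" by auto
  have "\<bar>co m H i n * x^n\<bar> = (1 / fact n) * \<bar>mpow m H q i 1\<bar> * \<bar>x\<bar>^n"
    unfolding n co_at by (simp add: abs_mult abs_psi_coeff power_abs)
  also have "\<dots> \<le> (1 / fact n) * B^n * \<bar>x\<bar>^n"
  proof -
    have "B^q \<le> B^n" using Bp(2) n by (intro power_increasing) auto
    hence "\<bar>mpow m H q i 1\<bar> \<le> B^n" using P_bound[OF i, of q] by linarith
    thus ?thesis by (intro mult_right_mono mult_left_mono) auto
  qed
  also have "\<dots> = inverse (fact n) * (B * \<bar>x\<bar>)^n" by (simp add: power_mult_distrib field_simps)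
  finally show ?thesis .
qed

lemma co_summable: "i \<in> {1..m} \<Longrightarrow> summable (\<lambda>n. co m H i n * x^n)"
  by (rule summable_comparison_test[OF _ summable_exp[of "B * \<bar>x\<bar>"]])
     (use co_bound in \<open>auto intro!: exI[of _ 0]\<close>)

lemma fmat_series:
  assumes i: "i \<in> {1..m}"
  shows "f_mat m H t i 1 = (\<Sum>n. co m H i n * t^n)"
proof -
  define u where "u q = psi_coeff q * ((t^2)^q * mpow m H q i 1)" for q
  have ub: "norm (u q) \<le> inverse (fact q) * (B * t^2)^q" for q
  proof -
    have f: "(2::real) / fact (2*q+2) \<le> inverse (fact q)"
    proof -
      have e: "(fact (2*q+2)::real) = (2*real q+2) * fact (2*q+1)"
        by (simp add: algebra_simps)
      have "2 * fact q \<le> (fact (2*q+2)::real)" unfolding e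
        by (intro mult_mono fact_mono) auto
      thus ?thesis by (rule frac_aux4) auto
    qed
    have "norm (u q) = 2 / fact (2*q+2) * ((t^2)^q * \<bar>mpow m H q i 1\<bar>)"
      unfolding u_def by (simp add: abs_mult abs_psi_coeff power_abs)
    also have "\<dots> \<le> inverse (fact q) * ((t^2)^q * B^q)"
      using f P_bound[OF i, of q] by (intro mult_mono mult_left_mono) auto
    also have "\<dots> = inverse (fact q) * (B * t^2)^q" by (simp add: power_mult_distrib ac_simps)
    finally show ?thesis .
  qed
  have us: "summable u"
    by (rule summable_comparison_test[OF _ summable_exp[of "B * t^2"]]) (use ub in auto)
  have "(\<lambda>q. t^2/2 * u q) sums (t^2/2 * suminf u)" by (intro sums_mult summable_sums us)
  moreover have "(\<lambda>q. t^2/2 * u q) = (\<lambda>q. co m H i (2*q+2) * t^(2*q+2))"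
  proof (rule ext)
    fix q
    have "t^(2*q+2) = t^2 * (t^2)^q" by (simp only: power_add power_mult mult.commute power_commutes[of t]) (simp add: power_mult[symmetric] mult.commute)
    thus "t^2/2 * u q = co m H i (2*q+2) * t^(2*q+2)" unfolding u_def co_at by (simp only: divide_inverse ac_simps)
  qed
  ultimately have "(\<lambda>q. (\<lambda>n. co m H i n * t^n) ((\<lambda>q. 2*q+2) q)) sums (t^2/2 * suminf u)" by simp
  hence "(\<lambda>n. co m H i n * t^n) sums (t^2/2 * suminf u)"
    by (subst (asm) sums_mono_reindex) (auto simp: strict_mono_def co_zero)
  hence "(\<Sum>n. co m H i n * t^n) = t^2/2 * suminf u" by (rule sums_unique[symmetric])
  also have "\<dots> = f_mat m H t i 1"
    unfolding f_mat_def psi_mat_def u_def by (simp add: mpow_scale)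
  finally show ?thesis by simp
qed

end

lemma frac_aux2:
  fixes a b c d e :: real
  shows "a \<noteq> 0 \<Longrightarrow> b \<noteq> 0 \<Longrightarrow> c \<noteq> 0 \<Longrightarrow> a*b*(2*d/(a*b*c))*e/2 = d*e/c"
  by (simp add: field_simps)

lemma frac_aux3:
  fixes c d e :: real
  shows "2 * d / c / 2 * e = d * e / c"
  by simp

lemma co_identity:
  assumes i: "i \<in> {1..m}"
  shows "(\<Sum>j\<in>{1..m}. H i j * co m H j n) + diffs (diffs (co m H i)) n = (if n = 0 \<and> i = 1 then 1 else 0)"
proof (cases "even n")
  case False
  hence "co m H j n = 0" for j unfolding co_def by simp
  moreover have "co m H i (Suc (Suc n)) = 0" using False unfolding co_def by simp
  ultimately show ?thesis using False by (auto simp: diffs_def)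
next
  case True
  then obtain q where n: "n = 2*q" by auto
  have dd: "diffs (diffs (co m H i)) n = (-1)^q * mpow m H q i 1 / fact (2*q)"
  proof -
    have "diffs (diffs (co m H i)) n = real (Suc n) * (real (Suc (Suc n)) * co m H i (2*q+2))"
      by (simp add: diffs_def n)
    also have "\<dots> = real (2*q+1) * real (2*q+2) * (2 * (-1)^q / fact (2*q+2)) * mpow m H q i 1 / 2"
      unfolding co_at psi_coeff_def n by simp
    also have "\<dots> = (-1)^q * mpow m H q i 1 / fact (2*q)"
    proof -
      have F: "(fact (2*q+2)::real) = real (2*q+1) * real (2*q+2) * fact (2*q)"
        by (simp add: algebra_simps)
      show ?thesis unfolding F by (rule frac_aux2) auto
    qed
    finally show ?thesis .
  qed
  show ?thesis
  proof (cases q)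
    case 0
    hence "co m H j n = 0" for j unfolding co_def n by simp
    thus ?thesis using dd 0 n by simp
  next
    case (Suc p)
    have cj: "co m H j n = psi_coeff p * mpow m H p j 1 / 2" for j
      using co_at[of m H j p] n Suc by (simp add: algebra_simps)
    have "(\<Sum>j\<in>{1..m}. H i j * co m H j n) = psi_coeff p / 2 * (\<Sum>j\<in>{1..m}. H i j * mpow m H p j 1)"
      unfolding cj by (simp add: sum_distrib_left ac_simps)
    also have "\<dots> = psi_coeff p / 2 * mpow m H q i 1" using Suc by simp
    also have "\<dots> = (-1)^p * mpow m H q i 1 / fact (2*q)"
    proof -
      have "2*p+2 = 2*q" using Suc by simp
      thus ?thesis unfolding psi_coeff_def by (simp only: frac_aux3)
    qed
    finally have S: "(\<Sum>j\<in>{1..m}. H i j * co m H j n) = (-1)^p * mpow m H q i 1 / fact (2*q)" .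
    have pw: "(-1::real)^q = -((-1)^p)" using Suc by simp
    have n0: "n \<noteq> 0" using Suc n by simp
    show ?thesis unfolding S dd pw using n0 by simp
  qed
qed



context lanc begin

lemma v_norm: "i \<in> {1..m+1} \<Longrightarrow> norm (v i) = 1"
proof -
  assume "i \<in> {1..m+1}"
  hence "v i \<bullet> v i = 1" using orth by auto
  thus ?thesis by (simp add: norm_eq_1)
qed

lemma entry_bound:
  assumes i: "i \<in> {1..m+1}" and j: "j \<in> {1..m+1}"
  shows "\<bar>v i \<bullet> a (v j)\<bar> \<le> (if i = j then 1 else 1/2)"
proof -
  have ax: "a (v j) = (1/2) *\<^sub>R (X (v j) + v j)" unfolding X_def by (simp add: algebra_simps)
  have e: "v i \<bullet> a (v j) = (v i \<bullet> X (v j) + v i \<bullet> v j) / 2"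
    unfolding ax by (simp add: inner_add_right)
  have "\<bar>v i \<bullet> X (v j)\<bar> \<le> norm (v i) * norm (X (v j))" by (rule Cauchy_Schwarz_ineq2)
  also have "\<dots> \<le> 1 * norm (v j)" using v_norm[OF i] contX[of "v j"] by simp
  also have "\<dots> = 1" using v_norm[OF j] by simp
  finally have s: "\<bar>v i \<bullet> X (v j)\<bar> \<le> 1" .
  show ?thesis
  proof (cases "i = j")
    case True
    hence "v i \<bullet> v j = 1" using orth i by auto
    thus ?thesis using e s True by (simp add: abs_le_iff)
  next
    case False
    hence "v i \<bullet> v j = 0" using orth i j by auto
    thus ?thesis using e s False by (simp add: abs_le_iff) linarith
  qed
qed

lemma beta_m: "\<beta> m = h"
proof -
  have "a (v m) = (\<Sum>i\<in>{1..m}. H i m *\<^sub>R v i) + h *\<^sub>R v (m + 1)" using lanczos m1 by auto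
  hence "\<beta> m = (\<Sum>i\<in>{1..m}. H i m * (v (m+1) \<bullet> v i)) + h * (v (m+1) \<bullet> v (m+1))"
    unfolding \<beta>_def by (simp add: inner_add_right inner_sum_right)
  also have "(\<Sum>i\<in>{1..m}. H i m * (v (m+1) \<bullet> v i)) = 0" using orth by (intro sum.neutral) auto
  also have "v (m+1) \<bullet> v (m+1) = 1" using orth by auto
  finally show ?thesis by simp
qed

end



theorem proposition3p6:
  fixes A :: "real^'n^'n" and w :: "real^'n" and m :: nat
    and v :: "nat \<Rightarrow> real^'n" and H :: "nat \<Rightarrow> nat \<Rightarrow> real" and h :: real
    and y r :: "real \<Rightarrow> real^'n"
  assumes symA: "transpose A = A"
    and specA: "mat_spectrum A \<subseteq> {0..1}"
    and w_norm: "norm w = 1"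
    and m2: "m \<ge> 2"
    and v1: "v 1 = w"
    and orth: "\<forall>i\<in>{1..m+1}. \<forall>j\<in>{1..m+1}. v i \<bullet> v j = (if i = j then 1 else 0)"
    and Hdef: "\<forall>i\<in>{1..m}. \<forall>j\<in>{1..m}. H i j = v i \<bullet> (A *v v j)"
    and Htri: "\<forall>i\<in>{1..m}. \<forall>j\<in>{1..m}. (i + 1 < j \<or> j + 1 < i) \<longrightarrow> H i j = 0"
    and Hsym: "\<forall>i\<in>{1..m}. \<forall>j\<in>{1..m}. H i j = H j i"
    and h_nonneg: "h \<ge> 0"
    and lanczos: "\<forall>j\<in>{1..m}. A *v v j
                    = (\<Sum>i\<in>{1..m}. H i j *\<^sub>R v i) + (if j = m then h *\<^sub>R v (m + 1) else 0)"
    and y_def: "\<And>t. y t = (\<Sum>j\<in>{1..m}. f_mat m H t j 1 *\<^sub>R v j)"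
    and r_def: "\<And>t. r t = - (A *v y t) + v 1
                   - vector_derivative (\<lambda>s. vector_derivative y (at s)) (at t)"
  shows "\<forall>t\<in>{0..1}. norm (r t) \<le> 128 / 15 * (t / 2) ^ (2 * m) / fact (2 * m)"
proof -
  define a where "a = (\<lambda>x. A *v x)"
  have lin: "linear a" unfolding a_def by (rule matrix_vector_mul_linear)
  have sym: "a x \<bullet> y = x \<bullet> a y" for x y
  proof -
    have "x v* A = A *v x" using vector_transpose_matrix[of x A] symA by simp
    thus ?thesis unfolding a_def using dot_lmul_matrix[of x A y] by simp
  qed
  have spec: "0 \<le> c \<and> c \<le> 1" if "x \<noteq> 0" "a x = c *\<^sub>R x" for c x
  proof -
    have "c \<in> mat_spectrum A" unfolding mat_spectrum_def using that a_def by auto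
    thus ?thesis using specA by auto
  qed
  have m1: "m \<ge> 1" using m2 by simp
  have so: "symop a" by (rule symop.intro[OF lin]) (use sym spec in auto)
  have la: "lanc_axioms a m v H h"
    by (rule lanc_axioms.intro) (use m1 orth Htri lanczos in \<open>auto simp: a_def\<close>)
  interpret lanc a m v H h by (rule lanc.intro[OF so la])
  have HA: "H i j = v i \<bullet> a (v j)" if "i \<in> {1..m}" "j \<in> {1..m}" for i j
    using Hdef that unfolding a_def by auto
  have diag: "\<forall>i\<in>{1..m}. \<bar>H i i\<bar> \<le> 1"
    using entry_bound HA by fastforce
  have off: "\<forall>i\<in>{1..m}. \<forall>j\<in>{1..m}. i \<noteq> j \<longrightarrow> \<bar>H i j\<bar> \<le> 1/2"
  proof (intro ballI impI)
    fix i j assume "i \<in> {1..m}" "j \<in> {1..m}" "i \<noteq> j"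
    thus "\<bar>H i j\<bar> \<le> 1/2" using entry_bound[of i j] HA by auto
  qed
  have Pb: "\<bar>mpow m H k m 1\<bar> \<le> Qp H m * cc k m" for k
    using mpow_bound[OF Htri Hsym diag off] m1 by auto
  have QPh: "2^(2*m-1) * (Qp H m * h) \<le> 1"
  proof -
    have "(\<Prod>j\<in>{1..m}. \<beta> j) = \<beta> m * (\<Prod>j\<in>{1..<m}. \<beta> j)"
    proof -
      have "{1..m} = insert m {1..<m}" using m1 by auto
      thus ?thesis by simp
    qed
    also have "(\<Prod>j\<in>{1..<m}. \<beta> j) = (\<Prod>j\<in>{1..<m}. H (j+1) j)"
      by (intro prod.cong) (auto simp: \<beta>_def HA)
    finally have "\<bar>\<Prod>j\<in>{1..m}. \<beta> j\<bar> = h * Qp H m"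
      unfolding Qp_def beta_m using h_nonneg by (simp add: abs_mult abs_prod)
    thus ?thesis using beta_prod_bound by (simp add: ac_simps)
  qed
  define B where "B = 1 + (\<Sum>i\<in>{1..m}. \<Sum>l\<in>{1..m}. \<bar>H i l\<bar>)"
  interpret crude m H B
  proof
    show "\<forall>i\<in>{1..m}. (\<Sum>l\<in>{1..m}. \<bar>H i l\<bar>) \<le> B"
    proof
      fix i assume i: "i \<in> {1..m}"
      have "(\<Sum>l\<in>{1..m}. \<bar>H i l\<bar>) \<le> (\<Sum>i\<in>{1..m}. \<Sum>l\<in>{1..m}. \<bar>H i l\<bar>)"
        using i by (intro member_le_sum) (auto intro: sum_nonneg)
      thus "(\<Sum>l\<in>{1..m}. \<bar>H i l\<bar>) \<le> B" unfolding B_def by simp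
    qed
    show "B \<ge> 1" unfolding B_def by (auto intro!: sum_nonneg)
  qed
  define F where "F j t = (\<Sum>n. co m H j n * t^n)" for j t
  define F1 where "F1 j t = (\<Sum>n. diffs (co m H j) n * t^n)" for j t
  define F2 where "F2 j t = (\<Sum>n. diffs (diffs (co m H j)) n * t^n)" for j t
  have s0: "summable (\<lambda>n. co m H j n * x^n)" if "j \<in> {1..m}" for j x
    using co_summable[OF that] .
  have s1: "summable (\<lambda>n. diffs (co m H j) n * x^n)" if "j \<in> {1..m}" for j x
    by (rule termdiff_converges_all) (rule s0[OF that])
  have s2: "summable (\<lambda>n. diffs (diffs (co m H j)) n * x^n)" if "j \<in> {1..m}" for j x
    by (rule termdiff_converges_all) (rule s1[OF that])
  have D1: "(F j has_field_derivative F1 j t) (at t)" if "j \<in> {1..m}" for j t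
    unfolding F_def[abs_def] F1_def by (rule termdiffs_strong_converges_everywhere) (rule s0[OF that])
  have D2: "(F1 j has_field_derivative F2 j t) (at t)" if "j \<in> {1..m}" for j t
    unfolding F1_def[abs_def] F2_def by (rule termdiffs_strong_converges_everywhere) (rule s1[OF that])
  have yF: "y = (\<lambda>t. \<Sum>j\<in>{1..m}. F j t *\<^sub>R v j)"
  proof
    fix t show "y t = (\<Sum>j\<in>{1..m}. F j t *\<^sub>R v j)"
      unfolding y_def F_def by (intro sum.cong refl, subst fmat_series) auto
  qed
  have Y1: "(y has_vector_derivative (\<Sum>j\<in>{1..m}. F1 j t *\<^sub>R v j)) (at t)" for t
    unfolding yF
  proof (rule has_vector_derivative_sum)
    fix j assume j: "j \<in> {1..m}"
    show "((\<lambda>t. F j t *\<^sub>R v j) has_vector_derivative F1 j t *\<^sub>R v j) (at t)"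
      using has_vector_derivative_scaleR[OF D1[OF j] has_vector_derivative_const[of "v j"]] by simp
  qed
  have Y1': "(\<lambda>s. vector_derivative y (at s)) = (\<lambda>s. \<Sum>j\<in>{1..m}. F1 j s *\<^sub>R v j)"
    using vector_derivative_at[OF Y1] by auto
  have Y2: "((\<lambda>s. \<Sum>j\<in>{1..m}. F1 j s *\<^sub>R v j) has_vector_derivative (\<Sum>j\<in>{1..m}. F2 j t *\<^sub>R v j)) (at t)" for t
  proof (rule has_vector_derivative_sum)
    fix j assume j: "j \<in> {1..m}"
    show "((\<lambda>t. F1 j t *\<^sub>R v j) has_vector_derivative F2 j t *\<^sub>R v j) (at t)"
      using has_vector_derivative_scaleR[OF D2[OF j] has_vector_derivative_const[of "v j"]] by simp
  qed
  have GF: "(\<Sum>j\<in>{1..m}. H i j * F j t) + F2 i t = (if i = 1 then 1 else 0)" if i: "i \<in> {1..m}" for i t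
  proof -
    have "(\<Sum>j\<in>{1..m}. H i j * F j t) = (\<Sum>j\<in>{1..m}. \<Sum>n. H i j * (co m H j n * t^n))"
      unfolding F_def by (intro sum.cong refl) (simp add: suminf_mult s0)
    also have "\<dots> = (\<Sum>n. \<Sum>j\<in>{1..m}. H i j * (co m H j n * t^n))"
      by (rule suminf_sum[symmetric]) (auto intro: summable_mult s0)
    finally have "(\<Sum>j\<in>{1..m}. H i j * F j t) + F2 i t
        = (\<Sum>n. \<Sum>j\<in>{1..m}. H i j * (co m H j n * t^n)) + (\<Sum>n. diffs (diffs (co m H i)) n * t^n)"
      unfolding F2_def by simp
    also have "\<dots> = (\<Sum>n. (\<Sum>j\<in>{1..m}. H i j * (co m H j n * t^n)) + diffs (diffs (co m H i)) n * t^n)"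
      by (intro suminf_add summable_sum summable_mult s0 s2 i)
    also have "\<dots> = (\<Sum>n. (if n = 0 then (if i = 1 then 1 else 0) else 0))"
    proof (intro suminf_cong)
      fix n
      have "(\<Sum>j\<in>{1..m}. H i j * (co m H j n * t^n)) + diffs (diffs (co m H i)) n * t^n
          = ((\<Sum>j\<in>{1..m}. H i j * co m H j n) + diffs (diffs (co m H i)) n) * t^n"
        by (simp only: sum_distrib_right distrib_right mult.assoc)
      also have "\<dots> = (if n = 0 \<and> i = 1 then 1 else 0) * t^n" using co_identity[OF i] by simp
      finally show "(\<Sum>j\<in>{1..m}. H i j * (co m H j n * t^n)) + diffs (diffs (co m H i)) n * t^n
          = (if n = 0 then (if i = 1 then 1 else 0) else 0)" by auto
    qed
    also have "\<dots> = (if i = 1 then 1 else 0)"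
      using sums_unique[OF sums_single[of 0 "\<lambda>_. if i = 1 then 1 else (0::real)"]] by simp
    finally show ?thesis .
  qed
  have r_eq: "r t = - ((F m t * h) *\<^sub>R v (m+1))" for t
  proof -
    have vd: "vector_derivative (\<lambda>s. vector_derivative y (at s)) (at t) = (\<Sum>i\<in>{1..m}. F2 i t *\<^sub>R v i)"
      unfolding Y1' by (rule vector_derivative_at[OF Y2])
    have "A *v y t = a (\<Sum>j\<in>{1..m}. F j t *\<^sub>R v j)" unfolding yF a_def ..
    also have "\<dots> = (\<Sum>j\<in>{1..m}. F j t *\<^sub>R a (v j))"
      using lin by (simp add: linear_sum linear_scale)
    also have "\<dots> = (\<Sum>j\<in>{1..m}. F j t *\<^sub>R ((\<Sum>i\<in>{1..m}. H i j *\<^sub>R v i) + (if j = m then h *\<^sub>R v (m + 1) else 0)))"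
      using lanczos unfolding a_def by (intro sum.cong refl) auto
    also have "\<dots> = (\<Sum>j\<in>{1..m}. F j t *\<^sub>R (\<Sum>i\<in>{1..m}. H i j *\<^sub>R v i)) + (\<Sum>j\<in>{1..m}. F j t *\<^sub>R (if j = m then h *\<^sub>R v (m + 1) else 0))"
      by (simp only: scaleR_add_right sum.distrib)
    also have "(\<Sum>j\<in>{1..m}. F j t *\<^sub>R (\<Sum>i\<in>{1..m}. H i j *\<^sub>R v i)) = (\<Sum>j\<in>{1..m}. \<Sum>i\<in>{1..m}. (H i j * F j t) *\<^sub>R v i)"
      by (simp add: scaleR_sum_right ac_simps)
    also have "(\<Sum>j\<in>{1..m}. F j t *\<^sub>R (if j = m then h *\<^sub>R v (m + 1) else 0)) = (\<Sum>j\<in>{1..m}. (if j = m then (F m t * h) *\<^sub>R v (m + 1) else 0))"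
      by (intro sum.cong refl) auto
    also have "(\<Sum>j\<in>{1..m}. (if j = m then (F m t * h) *\<^sub>R v (m + 1) else 0)) = (F m t * h) *\<^sub>R v (m + 1)"
      using m1 by (simp add: sum.delta')
    also have "(\<Sum>j\<in>{1..m}. \<Sum>i\<in>{1..m}. (H i j * F j t) *\<^sub>R v i) = (\<Sum>i\<in>{1..m}. (\<Sum>j\<in>{1..m}. H i j * F j t) *\<^sub>R v i)"
      by (subst sum.swap) (simp add: scaleR_sum_left)
    finally have Ay: "A *v y t = (\<Sum>i\<in>{1..m}. (\<Sum>j\<in>{1..m}. H i j * F j t) *\<^sub>R v i) + (F m t * h) *\<^sub>R v (m + 1)" .
    have "(\<Sum>i\<in>{1..m}. (\<Sum>j\<in>{1..m}. H i j * F j t) *\<^sub>R v i) + (\<Sum>i\<in>{1..m}. F2 i t *\<^sub>R v i)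
        = (\<Sum>i\<in>{1..m}. ((\<Sum>j\<in>{1..m}. H i j * F j t) + F2 i t) *\<^sub>R v i)"
      by (simp add: sum.distrib scaleR_add_left)
    also have "\<dots> = (\<Sum>i\<in>{1..m}. (if i = 1 then v 1 else 0))"
      by (intro sum.cong refl, subst GF) auto
    also have "\<dots> = v 1" using m1 by (simp add: sum.delta')
    finally have S: "(\<Sum>i\<in>{1..m}. (\<Sum>j\<in>{1..m}. H i j * F j t) *\<^sub>R v i) + (\<Sum>i\<in>{1..m}. F2 i t *\<^sub>R v i) = v 1" .
    show ?thesis unfolding r_def vd Ay using S by (simp add: algebra_simps)
  qed
  have Fb: "\<bar>F m t\<bar> \<le> 2 * Qp H m * t^(2*m) / fact (2*m)" if t: "0 \<le> t" "t \<le> 1" for t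
  proof -
    have mm: "m \<in> {1..m}" using m1 by simp
    define u where "u q = psi_coeff q * ((t^2)^q * mpow m H q m 1)" for q
    have Fu: "F m t = t^2/2 * suminf u"
      unfolding F_def fmat_series[OF mm, symmetric] f_mat_def psi_mat_def u_def by (simp add: mpow_scale)
    have ub: "norm (u q) \<le> 2 * Qp H m * bser t m q" for q
    proof -
      have "norm (u q) = 2 / fact (2*q+2) * (t^(2*q) * \<bar>mpow m H q m 1\<bar>)"
        unfolding u_def using t by (simp add: abs_mult abs_psi_coeff power_mult)
      also have "\<dots> \<le> 2 / fact (2*q+2) * (t^(2*q) * (Qp H m * cc q m))"
        using Pb[of q] t by (intro mult_left_mono) auto
      also have "\<dots> = 2 * Qp H m * bser t m q" unfolding bser_def by (simp add: field_simps)
      finally show ?thesis .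
    qed
    have bs: "summable (bser t m)" and bl: "suminf (bser t m) \<le> 2 * t^(2*m-2) / fact (2*m)"
      using bser_summable_le[OF t m1] by auto
    have "norm (suminf u) \<le> (\<Sum>q. 2 * Qp H m * bser t m q)"
      by (rule norm_suminf_le[OF ub]) (intro summable_mult bs)
    also have "\<dots> = 2 * Qp H m * suminf (bser t m)" by (intro suminf_mult bs)
    also have "\<dots> \<le> 2 * Qp H m * (2 * t^(2*m-2) / fact (2*m))"
      by (intro mult_left_mono bl) (simp add: Qp_nonneg)
    finally have su: "\<bar>suminf u\<bar> \<le> 4 * Qp H m * t^(2*m-2) / fact (2*m)" by simp
    have "\<bar>F m t\<bar> = t^2/2 * \<bar>suminf u\<bar>" unfolding Fu by (simp add: abs_mult)
    also have "\<dots> \<le> t^2/2 * (4 * Qp H m * t^(2*m-2) / fact (2*m))"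
      by (intro mult_left_mono su) auto
    also have "\<dots> = 2 * Qp H m * (t^2 * t^(2*m-2)) / fact (2*m)" by simp
    also have "t^2 * t^(2*m-2) = t^(2*m)"
    proof -
      obtain q where q: "m = Suc q" using m1 by (cases m) auto
      show ?thesis unfolding q by (simp add: power_add[symmetric])
    qed
    finally show ?thesis .
  qed
  show ?thesis
  proof
    fix t :: real assume "t \<in> {0..1}"
    hence t: "0 \<le> t" "t \<le> 1" by auto
    have "norm (r t) = \<bar>F m t\<bar> * h"
      unfolding r_eq using v_norm[of "m+1"] h_nonneg by (simp add: abs_mult)
    also have "\<dots> \<le> 2 * Qp H m * t^(2*m) / fact (2*m) * h"
      using Fb[OF t] h_nonneg by (intro mult_right_mono) auto
    also have "\<dots> = 2 * (Qp H m * h) * t^(2*m) / fact (2*m)" by simp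
    also have "\<dots> \<le> 2 * (1 / 2^(2*m-1)) * t^(2*m) / fact (2*m)"
    proof -
      have "Qp H m * h \<le> 1 / 2^(2*m-1)" using QPh by (simp add: field_simps)
      thus ?thesis by (intro divide_right_mono mult_right_mono mult_left_mono) auto
    qed
    also have "\<dots> = 4 * (t/2)^(2*m) / fact (2*m)"
    proof -
      have "(2::real)^(2*m) = 2 * 2^(2*m-1)" using m1 by (cases m) auto
      thus ?thesis by (simp add: power_divide field_simps)
    qed
    also have "\<dots> \<le> 128 / 15 * (t/2)^(2*m) / fact (2*m)"
      using t by (intro divide_right_mono mult_right_mono) auto
    finally show "norm (r t) \<le> 128 / 15 * (t / 2) ^ (2 * m) / fact (2 * m)" .
  qed
qed


end
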